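(* If a mixed graph $G=(V,D,B)$ with $V=[m]$ has $|D|+|B|>\binom{m}{2}$ edges (where $|B|$ counts unordered bidirected edges), then $G$ is HTC-infinite-to-one: every family $(Y_v:v\in V)$ of subsets of $V$ either contains a set $Y_v$ not satisfying the half-trek criterion with respect to $v$, or contains a pair $Y_v,Y_w$ with $v\in Y_w$ and $w\in Y_v$.
   Context: A mixed graph is $G=(V,D,B)$ with $V=[m]$, $D\subseteq V\times V$ directed edges $v\to w$, $B$ a set of bidirected edges $v\leftrightarrow w$ (unordered), no self-loops. $\mathrm{pa}(v)=\{w:w\to v\in D\}$, $\mathrm{sib}(v)=\{w:w\leftrightarrow v\in B\}$. A half-trek from $v$ to $w$ is a path $v\leftrightarrow w_0\to w_1\to\cdots\to w_r=w$ (left side $\{v\}$, right side $\{w_0,\dots,w_r\}$) or $v\to w_1\to\cdots\to w_r=w$, $r\ge0$ (left side $\{v\}$, right side $\{v,w_1,\dots,w_r\}$); nodes may repeat. A system of half-treks from $X$ to $Y$ is a set of half-treks with distinct sources forming $X$ and distinct targets forming $Y$; no sided intersection means pairwise disjoint left sides and pairwise disjoint right sides. $Y$ satisfies the half-trek criterion w.r.t. $v$ if $|Y|=|\mathrm{pa}(v)|$, $Y\cap(\{v\}\cup\mathrm{sib}(v))=\emptyset$, and there is a system of half-treks with no sided intersection from $Y$ to $\mathrm{pa}(v)$. *)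

theory Defs
  imports Main
begin

text \<open>Mixed graph on vertex set V = {1..m}: D is a set of ordered pairs (v,w) meaning v -> w,
B is a set of unordered pairs {v,w} (two-element sets) meaning v <-> w.\<close>

definition mixed_graph :: "nat \<Rightarrow> (nat \<times> nat) set \<Rightarrow> nat set set \<Rightarrow> bool" where
  "mixed_graph m D B \<longleftrightarrow>
     D \<subseteq> {1..m} \<times> {1..m} \<and> (\<forall>v. (v, v) \<notin> D) \<and>
     (\<forall>e\<in>B. \<exists>v w. v \<in> {1..m} \<and> w \<in> {1..m} \<and> v \<noteq> w \<and> e = {v, w})"

definition pa :: "(nat \<times> nat) set \<Rightarrow> nat \<Rightarrow> nat set" where
  "pa D v = {w. (w, v) \<in> D}"

definition sib :: "nat set set \<Rightarrow> nat \<Rightarrow> nat set" where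
  "sib B v = {w. {w, v} \<in> B}"

text \<open>A directed walk: consecutive nodes are joined by directed edges (nodes may repeat).\<close>
definition dpath :: "(nat \<times> nat) set \<Rightarrow> nat list \<Rightarrow> bool" where
  "dpath D ps \<longleftrightarrow> ps \<noteq> [] \<and> (\<forall>i. Suc i < length ps \<longrightarrow> (ps ! i, ps ! Suc i) \<in> D)"

text \<open>A half-trek is encoded as (bi, ps): if bi, then ps = v # w0 # ... # wr with v <-> w0 and
w0 -> ... -> wr; otherwise ps = v # w1 # ... # wr with v -> w1 -> ... -> wr (r >= 0).\<close>
type_synonym halftrek = "bool \<times> nat list"

definition is_halftrek :: "(nat \<times> nat) set \<Rightarrow> nat set set \<Rightarrow> halftrek \<Rightarrow> bool" where
  "is_halftrek D B h \<longleftrightarrow>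
     (if fst h then length (snd h) \<ge> 2 \<and> {hd (snd h), hd (tl (snd h))} \<in> B \<and> dpath D (tl (snd h))
      else dpath D (snd h))"

definition ht_source :: "halftrek \<Rightarrow> nat" where
  "ht_source h = hd (snd h)"

definition ht_target :: "halftrek \<Rightarrow> nat" where
  "ht_target h = last (snd h)"

definition ht_left :: "halftrek \<Rightarrow> nat set" where
  "ht_left h = {ht_source h}"

definition ht_right :: "halftrek \<Rightarrow> nat set" where
  "ht_right h = (if fst h then set (tl (snd h)) else set (snd h))"

definition ht_system_nsi ::
  "(nat \<times> nat) set \<Rightarrow> nat set set \<Rightarrow> halftrek set \<Rightarrow> nat set \<Rightarrow> nat set \<Rightarrow> bool" where
  "ht_system_nsi D B H X Y \<longleftrightarrow>
     finite H \<and> (\<forall>h\<in>H. is_halftrek D B h) \<and>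
     inj_on ht_source H \<and> ht_source ` H = X \<and>
     inj_on ht_target H \<and> ht_target ` H = Y \<and>
     (\<forall>h1\<in>H. \<forall>h2\<in>H. h1 \<noteq> h2 \<longrightarrow> ht_left h1 \<inter> ht_left h2 = {}) \<and>
     (\<forall>h1\<in>H. \<forall>h2\<in>H. h1 \<noteq> h2 \<longrightarrow> ht_right h1 \<inter> ht_right h2 = {})"

definition htc :: "(nat \<times> nat) set \<Rightarrow> nat set set \<Rightarrow> nat set \<Rightarrow> nat \<Rightarrow> bool" where
  "htc D B Y v \<longleftrightarrow>
     card Y = card (pa D v) \<and> Y \<inter> ({v} \<union> sib B v) = {} \<and>
     (\<exists>H. ht_system_nsi D B H Y (pa D v))"

definition htc_infinite_to_one :: "nat \<Rightarrow> (nat \<times> nat) set \<Rightarrow> nat set set \<Rightarrow> bool" where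
  "htc_infinite_to_one m D B \<longleftrightarrow>
     (\<forall>Y :: nat \<Rightarrow> nat set. (\<forall>v\<in>{1..m}. Y v \<subseteq> {1..m}) \<longrightarrow>
        (\<exists>v\<in>{1..m}. \<not> htc D B (Y v) v) \<or>
        (\<exists>v\<in>{1..m}. \<exists>w\<in>{1..m}. v \<noteq> w \<and> v \<in> Y w \<and> w \<in> Y v))"

end

theory Submission
  imports Defs
begin

theorem mainTheorem4:
  fixes m :: nat and D :: "(nat \<times> nat) set" and B :: "nat set set"
  assumes "mixed_graph m D B"
    and "card D + card B > m choose 2"
  shows "htc_infinite_to_one m D B"
  unfolding htc_infinite_to_one_def
proof (intro allI impI, rule ccontr)
  fix Y :: "nat \<Rightarrow> nat set"
  assume Ysub: "\<forall>v\<in>{1..m}. Y v \<subseteq> {1..m}"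
    and nc: "\<not> ((\<exists>v\<in>{1..m}. \<not> htc D B (Y v) v) \<or>
        (\<exists>v\<in>{1..m}. \<exists>w\<in>{1..m}. v \<noteq> w \<and> v \<in> Y w \<and> w \<in> Y v))"
  have H: "\<And>v. v \<in> {1..m} \<Longrightarrow> htc D B (Y v) v" using nc by blast
  have nm: "\<And>v w. v \<in> {1..m} \<Longrightarrow> w \<in> {1..m} \<Longrightarrow> v \<noteq> w \<Longrightarrow> v \<in> Y w \<Longrightarrow> w \<notin> Y v"
    using nc by blast
  have Dsub: "D \<subseteq> {1..m} \<times> {1..m}" and Bsub: "\<forall>e\<in>B. \<exists>v w. v \<in> {1..m} \<and> w \<in> {1..m} \<and> v \<noteq> w \<and> e = {v, w}"
    using assms(1) unfolding mixed_graph_def by auto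
  have finD: "finite D" using Dsub finite_subset by blast
  have "converse D = (SIGMA v:{1..m}. pa D v)"
    using Dsub unfolding pa_def by auto
  have finpa: "\<And>v. finite (pa D v)"
  proof -
    fix v have "pa D v \<subseteq> {1..m}" using Dsub unfolding pa_def by auto
    thus "finite (pa D v)" using finite_subset by blast
  qed
  from \<open>converse D = _\<close> have cD: "card D = (\<Sum>v\<in>{1..m}. card (pa D v))"
  proof -
    have "card D = card (converse D)" by simp
    also have "\<dots> = card (SIGMA v:{1..m}. pa D v)" using \<open>converse D = _\<close> by simp
    also have "\<dots> = (\<Sum>v\<in>{1..m}. card (pa D v))"
      by (rule card_SigmaI) (use finpa in auto)
    finally show ?thesis .
  qed
  define P where "P = (SIGMA v:{1..m}. Y v)"
  have finY: "\<And>v. v\<in>{1..m} \<Longrightarrow> finite (Y v)" using Ysub finite_subset by blast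
  have "card P = (\<Sum>v\<in>{1..m}. card (Y v))" unfolding P_def using finY by simp
  also have "\<dots> = card D" unfolding cD
    by (rule sum.cong) (use H in \<open>auto simp: htc_def\<close>)
  finally have cP: "card P = card D" .
  define S where "S = {e. e \<subseteq> {1..m} \<and> card e = 2}"
  have cS: "card S = m choose 2" unfolding S_def using n_subsets[of "{1..m}" 2] by simp
  define f where "f = (\<lambda>(v::nat,w::nat). {v,w})"
  have notv: "\<And>v. v \<in> {1..m} \<Longrightarrow> v \<notin> Y v" using H unfolding htc_def by blast
  have nosib: "\<And>v w. v \<in> {1..m} \<Longrightarrow> w \<in> Y v \<Longrightarrow> {v,w} \<notin> B"
  proof -
    fix v w assume v: "v \<in> {1..m}" and w: "w \<in> Y v"
    have "Y v \<inter> sib B v = {}" using H[OF v] unfolding htc_def by blast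
    thus "{v,w} \<notin> B" using w unfolding sib_def by (auto simp: insert_commute)
  qed
  have inj: "inj_on f P"
  proof (rule inj_onI)
    fix x y assume x: "x \<in> P" and y: "y \<in> P" and e: "f x = f y"
    obtain a b where ab: "x = (a,b)" by fastforce
    obtain c d where cd: "y = (c,d)" by fastforce
    have a: "a \<in> {1..m}" "b \<in> Y a" using x ab P_def by auto
    have c: "c \<in> {1..m}" "d \<in> Y c" using y cd P_def by auto
    have "{a,b} = {c,d}" using e ab cd f_def by simp
    hence "(a = c \<and> b = d) \<or> (a = d \<and> b = c)" by (metis doubleton_eq_iff)
    moreover have "\<not> (a = d \<and> b = c \<and> a \<noteq> c)"
      using nm[of c a] a c Ysub by blast
    ultimately show "x = y" using ab cd by auto
  qed
  have fP: "f ` P \<subseteq> S"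
  proof
    fix e assume "e \<in> f ` P"
    then obtain a b where a: "a \<in> {1..m}" and b: "b \<in> Y a" and e: "e = {a,b}" unfolding P_def f_def by auto
    have ab: "a \<noteq> b" using notv[OF a] b by blast
    have "b \<in> {1..m}" using a b Ysub by blast
    thus "e \<in> S" unfolding S_def using a e ab by auto
  qed
  have BS: "B \<subseteq> S"
  proof
    fix e assume "e \<in> B"
    then obtain v w where "v \<in> {1..m}" "w \<in> {1..m}" "v \<noteq> w" "e = {v,w}" using Bsub by blast
    thus "e \<in> S" unfolding S_def by auto
  qed
  have disj: "f ` P \<inter> B = {}"
  proof (rule ccontr)
    assume "f ` P \<inter> B \<noteq> {}"
    then obtain x where x: "x \<in> P" "f x \<in> B" by blast
    obtain a b where ab: "x = (a,b)" by fastforce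
    have "a \<in> {1..m}" "b \<in> Y a" using x(1) ab P_def by auto
    hence "{a,b} \<notin> B" by (rule nosib)
    thus False using x(2) ab f_def by simp
  qed
  have finS: "finite S" unfolding S_def by (rule finite_subset[of _ "Pow {1..m}"]) auto
  have "card (f ` P \<union> B) = card (f ` P) + card B"
    by (rule card_Un_disjoint) (use finite_subset[OF fP finS] finite_subset[OF BS finS] disj in auto)
  also have "card (f ` P) = card D" using card_image[OF inj] cP by simp
  finally have cU: "card (f ` P \<union> B) = card D + card B" .
  have "card D + card B \<le> card S"
  proof -
    have "card (f ` P \<union> B) \<le> card S" using fP BS finS by (intro card_mono) auto
    thus ?thesis using cU by simp
  qed
  thus False using assms(2) cS by simp
qed

end
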